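(* Let $\mathcal{L}_1=(L_1,\nu_1)$ and $\mathcal{L}_2=(L_2,\nu_2)$ be propositional languages with common fragment $\mathcal{L}=(L_1\cap L_2,\nu)$, where $\nu=\nu_1|_{L_1\cap L_2}=\nu_2|_{L_1\cap L_2}$, and let $i_1:\Sigma_{\mathcal{L}}\to\Sigma_{\mathcal{L}_1}$, $i_2:\Sigma_{\mathcal{L}}\to\Sigma_{\mathcal{L}_2}$ be the monoid embeddings sending $\sigma$ to the unique substitution agreeing with $\sigma$ on $\mathrm{Var}$. Then the amalgam $(\Sigma_{\mathcal{L}},i_1,\Sigma_{\mathcal{L}_1},i_2,\Sigma_{\mathcal{L}_2})$ is strongly embeddable in $\Sigma_{\mathcal{L}_1\cup\mathcal{L}_2}$, i.e., there exist injective monoid homomorphisms $j_1:\Sigma_{\mathcal{L}_1}\to\Sigma_{\mathcal{L}_1\cup\mathcal{L}_2}$ and $j_2:\Sigma_{\mathcal{L}_2}\to\Sigma_{\mathcal{L}_1\cup\mathcal{L}_2}$ with $j_1\circ i_1=j_2\circ i_2$ and $j_1[\Sigma_{\mathcal{L}_1}]\cap j_2[\Sigma_{\mathcal{L}_2}]=j_1i_1[\Sigma_{\mathcal{L}}]=j_2i_2[\Sigma_{\mathcal{L}}]$.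
   Context: A propositional language $(L,\nu)$ is a set $L$ of connectives with arity function $\nu:L\to\omega$. Fix a denumerable set $\mathrm{Var}$ of variables; $\mathit{Fm}_{\mathcal{L}}$ is the absolutely free $\mathcal{L}$-algebra over $\mathrm{Var}$ and $\Sigma_{\mathcal{L}}$ is the monoid, under composition, of endomorphisms of $\mathit{Fm}_{\mathcal{L}}$ (substitutions); each substitution is determined by its values on $\mathrm{Var}$. $\mathcal{L}_1\cup\mathcal{L}_2$ is the language $(L_1\cup L_2,\nu_1\cup\nu_2)$. *)

theory Defs
  imports "HOL-Algebra.Group"
begin

datatype 'c fm = Var nat | App 'c "'c fm list"

fun wf_fm :: "'c set \<Rightarrow> ('c \<Rightarrow> nat) \<Rightarrow> 'c fm \<Rightarrow> bool" where
  "wf_fm L nu (Var n) = True"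
| "wf_fm L nu (App c ts) = (c \<in> L \<and> length ts = nu c \<and> (\<forall>t\<in>set ts. wf_fm L nu t))"

definition Fm :: "'c set \<Rightarrow> ('c \<Rightarrow> nat) \<Rightarrow> 'c fm set" where
  "Fm L nu = {t. wf_fm L nu t}"

definition is_endo :: "'c set \<Rightarrow> ('c \<Rightarrow> nat) \<Rightarrow> ('c fm \<Rightarrow> 'c fm) \<Rightarrow> bool" where
  "is_endo L nu \<sigma> \<longleftrightarrow>
     \<sigma> \<in> extensional (Fm L nu) \<and> \<sigma> ` Fm L nu \<subseteq> Fm L nu \<and>
     (\<forall>c ts. c \<in> L \<and> length ts = nu c \<and> set ts \<subseteq> Fm L nu \<longrightarrow>
        \<sigma> (App c ts) = App c (map \<sigma> ts))"

definition Subst :: "'c set \<Rightarrow> ('c \<Rightarrow> nat) \<Rightarrow> ('c fm \<Rightarrow> 'c fm) monoid" where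
  "Subst L nu = \<lparr> carrier = {\<sigma>. is_endo L nu \<sigma>},
                  mult = (\<lambda>\<sigma> \<tau>. restrict (\<sigma> \<circ> \<tau>) (Fm L nu)),
                  one = restrict id (Fm L nu) \<rparr>"

definition emb :: "'c set \<Rightarrow> ('c \<Rightarrow> nat) \<Rightarrow> ('c fm \<Rightarrow> 'c fm) \<Rightarrow> ('c fm \<Rightarrow> 'c fm)" where
  "emb L' nu' \<sigma> = (THE \<tau>. \<tau> \<in> carrier (Subst L' nu') \<and> (\<forall>n. \<tau> (Var n) = \<sigma> (Var n)))"

definition mono_emb :: "('a, 'x) monoid_scheme \<Rightarrow> ('b, 'y) monoid_scheme \<Rightarrow> ('a \<Rightarrow> 'b) \<Rightarrow> bool" where
  "mono_emb M N j \<longleftrightarrow> j \<in> hom M N \<and> j \<one>\<^bsub>M\<^esub> = \<one>\<^bsub>N\<^esub> \<and> inj_on j (carrier M)"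

end

theory Submission
  imports Defs
begin

fun subst :: "(nat \<Rightarrow> 'c fm) \<Rightarrow> 'c fm \<Rightarrow> 'c fm" where
  "subst f (Var n) = f n"
| "subst f (App c ts) = App c (map (subst f) ts)"

definition extn :: "'c set \<Rightarrow> ('c \<Rightarrow> nat) \<Rightarrow> (nat \<Rightarrow> 'c fm) \<Rightarrow> 'c fm \<Rightarrow> 'c fm" where
  "extn L nu f = restrict (subst f) (Fm L nu)"

lemma wf_mono: "L \<subseteq> L' \<Longrightarrow> \<forall>c\<in>L. nu c = nu' c \<Longrightarrow> wf_fm L nu t \<Longrightarrow> wf_fm L' nu' t"
  by (induction t) auto

lemma wf_inter: "wf_fm L1 nu1 t \<Longrightarrow> wf_fm L2 nu2 t \<Longrightarrow> wf_fm (L1 \<inter> L2) nu1 t"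
  by (induction t) auto

lemma wf_subst: "\<forall>n. wf_fm L nu (f n) \<Longrightarrow> wf_fm L nu t \<Longrightarrow> wf_fm L nu (subst f t)"
  by (induction t) auto

lemma subst_subst: "subst f (subst g t) = subst (\<lambda>n. subst f (g n)) t"
  by (induction t) auto

lemma subst_Var: "subst Var t = t"
  by (induction t) (auto simp: map_idI)

lemma Var_Fm[simp]: "Var n \<in> Fm L nu"
  by (simp add: Fm_def)

lemma ext_carrier:
  assumes f: "\<forall>n. f n \<in> Fm L nu"
  shows "extn L nu f \<in> carrier (Subst L nu)"
proof -
  have wf: "\<forall>n. wf_fm L nu (f n)" using f by (simp add: Fm_def)
  have "is_endo L nu (extn L nu f)"
    unfolding is_endo_def
  proof (intro conjI allI impI)
    show "extn L nu f \<in> extensional (Fm L nu)" by (simp add: extn_def)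
    show "extn L nu f ` Fm L nu \<subseteq> Fm L nu"
      using wf by (auto simp: extn_def Fm_def wf_subst)
    fix c ts assume h: "c \<in> L \<and> length ts = nu c \<and> set ts \<subseteq> Fm L nu"
    then have "App c ts \<in> Fm L nu" by (auto simp: Fm_def)
    moreover have "map (extn L nu f) ts = map (subst f) ts"
      using h by (auto simp: extn_def)
    ultimately show "extn L nu f (App c ts) = App c (map (extn L nu f) ts)"
      by (simp add: extn_def)
  qed
  then show ?thesis by (simp add: Subst_def)
qed

lemma carrier_ext:
  assumes "\<sigma> \<in> carrier (Subst L nu)"
  shows "\<sigma> = extn L nu (\<lambda>n. \<sigma> (Var n)) \<and> (\<forall>n. \<sigma> (Var n) \<in> Fm L nu)"
proof -
  have e: "is_endo L nu \<sigma>" using assms by (simp add: Subst_def)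
  have hom: "\<And>c ts. c \<in> L \<and> length ts = nu c \<and> set ts \<subseteq> Fm L nu \<Longrightarrow> \<sigma> (App c ts) = App c (map \<sigma> ts)"
  proof -
    fix c ts assume "c \<in> L \<and> length ts = nu c \<and> set ts \<subseteq> Fm L nu"
    moreover have "\<forall>c ts. c \<in> L \<and> length ts = nu c \<and> set ts \<subseteq> Fm L nu \<longrightarrow>
        \<sigma> (App c ts) = App c (map \<sigma> ts)"
      using e unfolding is_endo_def by (elim conjE)
    ultimately show "\<sigma> (App c ts) = App c (map \<sigma> ts)" by (elim allE impE)
  qed
  have ex: "\<sigma> \<in> extensional (Fm L nu)"
    using e unfolding is_endo_def by (elim conjE)
  have im: "\<sigma> ` Fm L nu \<subseteq> Fm L nu"
    using e unfolding is_endo_def by (elim conjE)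
  have key: "wf_fm L nu t \<longrightarrow> \<sigma> t = subst (\<lambda>n. \<sigma> (Var n)) t" for t
  proof (induction t)
    case (Var x)
    then show ?case by simp
  next
    case (App c ts)
    show ?case
    proof
      assume w: "wf_fm L nu (App c ts)"
      then have "c \<in> L \<and> length ts = nu c \<and> set ts \<subseteq> Fm L nu"
        by (auto simp: Fm_def)
      then have "\<sigma> (App c ts) = App c (map \<sigma> ts)"
        by (rule hom)
      also have "map \<sigma> ts = map (subst (\<lambda>n. \<sigma> (Var n))) ts"
      proof (rule map_cong[OF refl])
        fix x assume x: "x \<in> set ts"
        then have "wf_fm L nu x" using w by simp
        then show "\<sigma> x = subst (\<lambda>n. \<sigma> (Var n)) x" using App.IH[OF x] by (rule mp[rotated])
      qed
      finally show "\<sigma> (App c ts) = subst (\<lambda>n. \<sigma> (Var n)) (App c ts)" by simp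
    qed
  qed
  have 1: "\<sigma> = extn L nu (\<lambda>n. \<sigma> (Var n))"
    unfolding extn_def
  proof (rule extensionalityI[OF ex restrict_extensional])
    fix t assume t: "t \<in> Fm L nu"
    then have "\<sigma> t = subst (\<lambda>n. \<sigma> (Var n)) t" using key[of t] by (simp add: Fm_def)
    then show "\<sigma> t = restrict (subst (\<lambda>n. \<sigma> (Var n))) (Fm L nu) t"
      using t by simp
  qed
  have 2: "\<forall>n. \<sigma> (Var n) \<in> Fm L nu"
    using im Var_Fm by blast
  show ?thesis using 1 2 by blast
qed

lemma ext_Var: "extn L nu f (Var n) = f n"
  by (simp add: extn_def)

lemma ext_inj: "extn L nu f = extn L nu g \<Longrightarrow> f = g"
proof
  fix n assume "extn L nu f = extn L nu g"
  then have "extn L nu f (Var n) = extn L nu g (Var n)" by simp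
  then show "f n = g n" by (simp add: ext_Var)
qed

lemma emb_ext:
  assumes "\<forall>n. f n \<in> Fm L' nu'" "\<forall>n. \<sigma> (Var n) = f n"
  shows "emb L' nu' \<sigma> = extn L' nu' f"
  unfolding emb_def
proof (rule the_equality)
  show "extn L' nu' f \<in> carrier (Subst L' nu') \<and> (\<forall>n. extn L' nu' f (Var n) = \<sigma> (Var n))"
    using assms(1) ext_carrier[of f] assms(2) ext_Var[of L' nu' f] by simp
next
  fix \<tau> assume "\<tau> \<in> carrier (Subst L' nu') \<and> (\<forall>n. \<tau> (Var n) = \<sigma> (Var n))"
  then have "\<tau> = extn L' nu' (\<lambda>n. \<tau> (Var n))" using carrier_ext by blast
  moreover have "(\<lambda>n. \<tau> (Var n)) = f" using \<open>\<tau> \<in> _ \<and> _\<close> assms(2) by auto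
  ultimately show "\<tau> = extn L' nu' f" by simp
qed

lemma one_ext: "one (Subst L nu) = extn L nu Var"
  by (simp add: Subst_def extn_def subst_Var fun_eq_iff)

lemma mult_ext:
  assumes g: "\<forall>n. g n \<in> Fm L nu"
  shows "mult (Subst L nu) (extn L nu f) (extn L nu g) = extn L nu (\<lambda>n. subst f (g n))"
proof (rule ext)
  fix t
  show "mult (Subst L nu) (extn L nu f) (extn L nu g) t = extn L nu (\<lambda>n. subst f (g n)) t"
  proof (cases "t \<in> Fm L nu")
    case True
    then have "subst g t \<in> Fm L nu" using g by (simp add: Fm_def wf_subst)
    then show ?thesis using True by (simp add: Subst_def extn_def subst_subst)
  next
    case False
    then show ?thesis by (simp add: Subst_def extn_def)
  qed
qed


lemma ext_mono_emb:
  assumes f: "\<forall>n. f n \<in> Fm L nu" and sub: "Fm L nu \<subseteq> Fm L' nu'"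
  shows "emb L' nu' (extn L nu f) = extn L' nu' f"
  using f sub by (intro emb_ext) (auto simp: ext_Var)

lemma carrier_char: "carrier (Subst L nu) = extn L nu ` {f. \<forall>n. f n \<in> Fm L nu}"
proof
  show "carrier (Subst L nu) \<subseteq> extn L nu ` {f. \<forall>n. f n \<in> Fm L nu}"
  proof
    fix \<sigma> assume "\<sigma> \<in> carrier (Subst L nu)"
    from carrier_ext[OF this] show "\<sigma> \<in> extn L nu ` {f. \<forall>n. f n \<in> Fm L nu}"
      by blast
  qed
  show "extn L nu ` {f. \<forall>n. f n \<in> Fm L nu} \<subseteq> carrier (Subst L nu)"
    using ext_carrier by blast
qed

lemma inj_extn: "inj (extn L nu)"
  by (rule injI) (rule ext_inj)

lemma image_emb:
  assumes sub: "Fm L nu \<subseteq> Fm L' nu'"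
  shows "emb L' nu' ` carrier (Subst L nu) = extn L' nu' ` {f. \<forall>n. f n \<in> Fm L nu}"
  unfolding carrier_char image_image
  using ext_mono_emb[OF _ sub] by (intro image_cong) auto

lemma mono_emb_gen:
  assumes sub: "Fm L nu \<subseteq> Fm L' nu'"
  shows "mono_emb (Subst L nu) (Subst L' nu') (emb L' nu')"
  unfolding mono_emb_def
proof (intro conjI)
  show "emb L' nu' \<in> hom (Subst L nu) (Subst L' nu')"
    unfolding hom_def
  proof (intro CollectI conjI ballI funcsetI)
    fix x assume "x \<in> carrier (Subst L nu)"
    then obtain f where f: "\<forall>n. f n \<in> Fm L nu" and x: "x = extn L nu f"
      using carrier_char by blast
    have "\<forall>n. f n \<in> Fm L' nu'" using f sub by blast
    then show "emb L' nu' x \<in> carrier (Subst L' nu')"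
      using x ext_mono_emb[OF f sub] ext_carrier by metis
  next
    fix x y assume "x \<in> carrier (Subst L nu)" "y \<in> carrier (Subst L nu)"
    then obtain f g where f: "\<forall>n. f n \<in> Fm L nu" and x: "x = extn L nu f"
      and g: "\<forall>n. g n \<in> Fm L nu" and y: "y = extn L nu g"
      using carrier_char by blast
    have g': "\<forall>n. g n \<in> Fm L' nu'" using g sub by blast
    have fg: "\<forall>n. subst f (g n) \<in> Fm L nu"
      using f g by (simp add: Fm_def wf_subst)
    have "emb L' nu' (x \<otimes>\<^bsub>Subst L nu\<^esub> y) = emb L' nu' (extn L nu (\<lambda>n. subst f (g n)))"
      using x y mult_ext[OF g] by simp
    also have "\<dots> = extn L' nu' (\<lambda>n. subst f (g n))"
      using ext_mono_emb[OF fg sub] .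
    also have "\<dots> = extn L' nu' f \<otimes>\<^bsub>Subst L' nu'\<^esub> extn L' nu' g"
      using mult_ext[OF g'] by simp
    also have "\<dots> = emb L' nu' x \<otimes>\<^bsub>Subst L' nu'\<^esub> emb L' nu' y"
      using x y ext_mono_emb[OF f sub] ext_mono_emb[OF g sub] by simp
    finally show "emb L' nu' (x \<otimes>\<^bsub>Subst L nu\<^esub> y) = emb L' nu' x \<otimes>\<^bsub>Subst L' nu'\<^esub> emb L' nu' y" .
  qed
  show "emb L' nu' \<one>\<^bsub>Subst L nu\<^esub> = \<one>\<^bsub>Subst L' nu'\<^esub>"
    unfolding one_ext by (rule ext_mono_emb[OF _ sub]) simp
  show "inj_on (emb L' nu') (carrier (Subst L nu))"
  proof (rule inj_onI)
    fix x y assume "x \<in> carrier (Subst L nu)" "y \<in> carrier (Subst L nu)"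
      and e: "emb L' nu' x = emb L' nu' y"
    then obtain f g where f: "\<forall>n. f n \<in> Fm L nu" and x: "x = extn L nu f"
      and g: "\<forall>n. g n \<in> Fm L nu" and y: "y = extn L nu g"
      using carrier_char by blast
    have "extn L' nu' f = extn L' nu' g"
      using e x y ext_mono_emb[OF f sub] ext_mono_emb[OF g sub] by simp
    then have "f = g" by (rule ext_inj)
    then show "x = y" using x y by simp
  qed
qed

theorem proposition4p2:
  fixes L1 L2 :: "'c set" and nu1 nu2 :: "'c \<Rightarrow> nat"
  assumes agree: "\<forall>c \<in> L1 \<inter> L2. nu1 c = nu2 c"
  defines "S \<equiv> Subst (L1 \<inter> L2) nu1"
      and "S1 \<equiv> Subst L1 nu1"
      and "S2 \<equiv> Subst L2 nu2"
      and "S12 \<equiv> Subst (L1 \<union> L2) (\<lambda>c. if c \<in> L1 then nu1 c else nu2 c)"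
      and "i1 \<equiv> emb L1 nu1"
      and "i2 \<equiv> emb L2 nu2"
  shows "\<exists>j1 j2. mono_emb S1 S12 j1 \<and> mono_emb S2 S12 j2 \<and>
           (\<forall>\<sigma> \<in> carrier S. j1 (i1 \<sigma>) = j2 (i2 \<sigma>)) \<and>
           j1 ` carrier S1 \<inter> j2 ` carrier S2 = (j1 \<circ> i1) ` carrier S \<and>
           (j1 \<circ> i1) ` carrier S = (j2 \<circ> i2) ` carrier S"
proof -
  define L12 where "L12 = L1 \<union> L2"
  define nu12 where "nu12 = (\<lambda>c. if c \<in> L1 then nu1 c else nu2 c)"
  define Lc where "Lc = L1 \<inter> L2"
  have F1: "Fm L1 nu1 \<subseteq> Fm L12 nu12"
    unfolding Fm_def L12_def nu12_def by (auto elim!: wf_mono[rotated 2])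
  have F2: "Fm L2 nu2 \<subseteq> Fm L12 nu12"
    unfolding Fm_def L12_def nu12_def using agree by (auto elim!: wf_mono[rotated 2])
  have Fc1: "Fm Lc nu1 \<subseteq> Fm L1 nu1"
    unfolding Fm_def Lc_def by (auto elim!: wf_mono[rotated 2])
  have Fc2: "Fm Lc nu1 \<subseteq> Fm L2 nu2"
    unfolding Fm_def Lc_def using agree by (auto elim!: wf_mono[rotated 2])
  have F12c: "Fm L1 nu1 \<inter> Fm L2 nu2 \<subseteq> Fm Lc nu1"
    unfolding Fm_def Lc_def by (auto elim!: wf_inter)
  define j where "j = emb L12 nu12"
  have S12: "S12 = Subst L12 nu12" unfolding S12_def L12_def nu12_def ..
  have S: "S = Subst Lc nu1" unfolding S_def Lc_def ..
  have m1: "mono_emb S1 S12 j"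
    unfolding S1_def S12 j_def by (rule mono_emb_gen[OF F1])
  have m2: "mono_emb S2 S12 j"
    unfolding S2_def S12 j_def by (rule mono_emb_gen[OF F2])
  have comp1: "j (i1 (extn Lc nu1 f)) = extn L12 nu12 f" if "\<forall>n. f n \<in> Fm Lc nu1" for f
  proof -
    have "i1 (extn Lc nu1 f) = extn L1 nu1 f"
      unfolding i1_def using ext_mono_emb[OF that Fc1] .
    moreover have "\<forall>n. f n \<in> Fm L1 nu1" using that Fc1 by blast
    ultimately show ?thesis unfolding j_def using ext_mono_emb[OF _ F1] by simp
  qed
  have comp2: "j (i2 (extn Lc nu1 f)) = extn L12 nu12 f" if "\<forall>n. f n \<in> Fm Lc nu1" for f
  proof -
    have "i2 (extn Lc nu1 f) = extn L2 nu2 f"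
      unfolding i2_def using ext_mono_emb[OF that Fc2] .
    moreover have "\<forall>n. f n \<in> Fm L2 nu2" using that Fc2 by blast
    ultimately show ?thesis unfolding j_def using ext_mono_emb[OF _ F2] by simp
  qed
  have eq: "\<forall>\<sigma> \<in> carrier S. j (i1 \<sigma>) = j (i2 \<sigma>)"
    unfolding S carrier_char using comp1 comp2 by auto
  have im1: "(j \<circ> i1) ` carrier S = extn L12 nu12 ` {f. \<forall>n. f n \<in> Fm Lc nu1}"
    unfolding S carrier_char image_image o_def using comp1 by (intro image_cong) auto
  have im2: "(j \<circ> i2) ` carrier S = extn L12 nu12 ` {f. \<forall>n. f n \<in> Fm Lc nu1}"
    unfolding S carrier_char image_image o_def using comp2 by (intro image_cong) auto
  have jS1: "j ` carrier S1 = extn L12 nu12 ` {f. \<forall>n. f n \<in> Fm L1 nu1}"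
    unfolding S1_def j_def by (rule image_emb[OF F1])
  have jS2: "j ` carrier S2 = extn L12 nu12 ` {f. \<forall>n. f n \<in> Fm L2 nu2}"
    unfolding S2_def j_def by (rule image_emb[OF F2])
  have sets: "{f. \<forall>n. f n \<in> Fm L1 nu1} \<inter> {f. \<forall>n. f n \<in> Fm L2 nu2} = {f. \<forall>n. f n \<in> Fm Lc nu1}"
    using F12c Fc1 Fc2 by blast
  have int: "j ` carrier S1 \<inter> j ` carrier S2 = (j \<circ> i1) ` carrier S"
    unfolding jS1 jS2 im1 image_Int[OF inj_extn, symmetric] sets ..
  have im12: "(j \<circ> i1) ` carrier S = (j \<circ> i2) ` carrier S"
    using im1 im2 by simp
  show ?thesis
    by (rule exI[of _ j], rule exI[of _ j]) (intro conjI m1 m2 eq int im12)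
qed

end
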